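(* Let $k\ge1$ and let $S_1,\dots,S_k\in\mathcal{B}_A(\mathcal{H})$. Then for every positive integer $n$, $$\omega_A^{2n}\Big(\sum_{i=1}^kS_i\Big)\le\frac{k^{2n-1}}{\sqrt2}\sum_{i=1}^k\omega_A\Big(\big(S_i^{\sharp_A}S_i\big)^n+i\,\big(S_iS_i^{\sharp_A}\big)^n\Big),$$ where the $i$ multiplying $\big(S_iS_i^{\sharp_A}\big)^n$ is the imaginary unit.
   Context: $\mathcal{H}$ is a complex Hilbert space with inner product $\langle\cdot,\cdot\rangle$, and $A$ is a fixed nonzero positive bounded operator on $\mathcal{H}$. Set $\langle x,y\rangle_A=\langle Ax,y\rangle$ and $\|x\|_A=\|A^{1/2}x\|$. $\mathcal{B}_A(\mathcal{H})$ is the set of bounded operators $T$ for which there exists a bounded $S$ with $\langle Tx,y\rangle_A=\langle x,Sy\rangle_A$ for all $x,y$ (equivalently $\mathcal{R}(T^*A)\subseteq\mathcal{R}(A)$). For $T\in\mathcal{B}_A(\mathcal{H})$, $T^{\sharp_A}=A^\dagger T^*A$ ($A^\dagger$ the Moore–Penrose inverse) is the reduced solution of $AX=T^*A$. $\omega_A(T)=\sup\{|\langle Tx,x\rangle_A|:\|x\|_A=1\}$. *)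

theory Defs
  imports "HOL-Analysis.Analysis"
begin

class complex_vector = real_vector +
  fixes scaleC :: "complex \<Rightarrow> 'a \<Rightarrow> 'a" (infixr "*\<^sub>C" 75)
  assumes scaleC_add_right: "scaleC a (x + y) = scaleC a x + scaleC a y"
    and scaleC_add_left: "scaleC (a + b) x = scaleC a x + scaleC b x"
    and scaleC_scaleC: "scaleC a (scaleC b x) = scaleC (a * b) x"
    and scaleC_one: "scaleC 1 x = x"
    and scaleR_scaleC: "scaleR r x = scaleC (complex_of_real r) x"

text \<open>Inner product linear in the first argument, conjugate-linear in the second.\<close>
class complex_inner = complex_vector + real_normed_vector +
  fixes cinner :: "'a \<Rightarrow> 'a \<Rightarrow> complex"
  assumes cinner_commute: "cinner x y = cnj (cinner y x)"
    and cinner_add_left: "cinner (x + y) z = cinner x z + cinner y z"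
    and cinner_scaleC_left: "cinner (scaleC r x) y = r * cinner x y"
    and cinner_self_real: "Im (cinner x x) = 0"
    and cinner_self_nonneg: "0 \<le> Re (cinner x x)"
    and cinner_self_eq_zero: "cinner x x = 0 \<longleftrightarrow> x = 0"
    and norm_eq_sqrt_cinner: "norm x = sqrt (Re (cinner x x))"

class chilbert_space = complex_inner + complete_space

definition cblinear :: "('a::complex_inner \<Rightarrow> 'a) \<Rightarrow> bool" where
  "cblinear T \<longleftrightarrow> bounded_linear T \<and> (\<forall>c x. T (c *\<^sub>C x) = c *\<^sub>C T x)"

definition adj :: "('a::complex_inner \<Rightarrow> 'a) \<Rightarrow> ('a \<Rightarrow> 'a)" where
  "adj T = (THE S. \<forall>x y. cinner (T x) y = cinner x (S y))"

definition positive_op :: "('a::complex_inner \<Rightarrow> 'a) \<Rightarrow> bool" where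
  "positive_op A \<longleftrightarrow> cblinear A \<and> (\<forall>x. Im (cinner (A x) x) = 0 \<and> 0 \<le> Re (cinner (A x) x))"

definition inner_A :: "('a::complex_inner \<Rightarrow> 'a) \<Rightarrow> 'a \<Rightarrow> 'a \<Rightarrow> complex" where
  "inner_A A x y = cinner (A x) y"

definition norm_A :: "('a::complex_inner \<Rightarrow> 'a) \<Rightarrow> 'a \<Rightarrow> real" where
  "norm_A A x = sqrt (Re (inner_A A x x))"

definition B_A :: "('a::complex_inner \<Rightarrow> 'a) \<Rightarrow> ('a \<Rightarrow> 'a) set" where
  "B_A A = {T. cblinear T \<and> (\<exists>S. cblinear S \<and> (\<forall>x y. inner_A A (T x) y = inner_A A x (S y)))}"

text \<open>T^{sharp_A} = A^dagger T^* A, i.e. the reduced solution (Douglas) of A X = T^* A: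
  the unique bounded solution whose range lies in the closure of the range of A.\<close>
definition sharp_A :: "('a::complex_inner \<Rightarrow> 'a) \<Rightarrow> ('a \<Rightarrow> 'a) \<Rightarrow> ('a \<Rightarrow> 'a)" where
  "sharp_A A T = (THE X. cblinear X \<and> (\<forall>x. A (X x) = adj T (A x)) \<and> range X \<subseteq> closure (range A))"

definition omega_A :: "('a::complex_inner \<Rightarrow> 'a) \<Rightarrow> ('a \<Rightarrow> 'a) \<Rightarrow> real" where
  "omega_A A T = Sup {cmod (inner_A A (T x) x) | x. norm_A A x = 1}"

end

theory Submission
  imports Defs
begin


lemma scaleC_minus1: "scaleC (-1) (x::'a::complex_vector) = - x"
proof -
  have "- x = scaleR (-1) x" by simp
  also have "\<dots> = scaleC (of_real (-1)) x" by (rule scaleR_scaleC)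
  finally show ?thesis by simp
qed

lemma scaleC_zero_right[simp]: "scaleC c (0::'a::complex_vector) = 0"
  using scaleC_add_right[of c "0::'a" 0] by simp

lemma scaleC_zero_left[simp]: "scaleC 0 (x::'a::complex_vector) = 0"
  using scaleR_scaleC[of 0 x] by simp

lemma scaleC_minus_right: "scaleC c (- (x::'a::complex_vector)) = - scaleC c x"
proof -
  have "scaleC c (- x) = scaleC c (scaleC (-1) x)" by (simp add: scaleC_minus1)
  also have "\<dots> = scaleC (-1) (scaleC c x)" by (simp add: scaleC_scaleC)
  finally show ?thesis by (simp add: scaleC_minus1)
qed

lemma scaleC_diff_right: "scaleC c ((x::'a::complex_vector) - y) = scaleC c x - scaleC c y"
proof -
  have "scaleC c (x - y) = scaleC c (x + - y)" by simp
  also have "\<dots> = scaleC c x + - scaleC c y" by (simp only: scaleC_add_right scaleC_minus_right)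
  finally show ?thesis by simp
qed

lemma scaleC_diff_left: "scaleC (a - b) (x::'a::complex_vector) = scaleC a x - scaleC b x"
proof -
  have "scaleC (a - b) x = scaleC (a + (-1) * b) x" by simp
  also have "\<dots> = scaleC a x + scaleC (-1) (scaleC b x)"
    by (simp only: scaleC_add_left scaleC_scaleC)
  finally have "scaleC (a - b) x = scaleC a x + scaleC (-1) (scaleC b x)" .
  then show ?thesis by (simp add: scaleC_minus1)
qed

lemma scaleC_sum_right: "scaleC c (\<Sum>i\<in>I. f i) = (\<Sum>i\<in>I. scaleC c (f i :: 'a::complex_vector))"
  by (induction I rule: infinite_finite_induct) (auto simp: scaleC_add_right)

lemma scaleC_of_real: "scaleC (of_real r) (x::'a::complex_vector) = scaleR r x"
  by (simp add: scaleR_scaleC)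

locale psd_form =
  fixes B :: "'a::complex_vector \<Rightarrow> 'a \<Rightarrow> complex"
  assumes add_left: "B (x + y) z = B x z + B y z"
    and scale_left: "B (scaleC c x) y = c * B x y"
    and herm: "B x y = cnj (B y x)"
    and nonneg: "0 \<le> Re (B x x)"
begin

lemma add_right: "B x (y + z) = B x y + B x z"
proof -
  have "B x (y+z) = cnj (B (y+z) x)" by (rule herm)
  also have "\<dots> = cnj (B y x) + cnj (B z x)" by (simp add: add_left)
  also have "\<dots> = B x y + B x z" by (simp add: herm[of x y] herm[of x z])
  finally show ?thesis .
qed

lemma scale_right: "B x (scaleC c y) = cnj c * B x y"
proof -
  have "B x (scaleC c y) = cnj (B (scaleC c y) x)" by (rule herm)
  also have "\<dots> = cnj c * cnj (B y x)" by (simp add: scale_left)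
  also have "\<dots> = cnj c * B x y" by (simp add: herm[of x y])
  finally show ?thesis .
qed

lemma diff_left: "B (x - y) z = B x z - B y z"
proof -
  have "B (x - y) z = B (x + scaleC (-1) y) z" by (simp add: scaleC_minus1)
  then show ?thesis by (simp add: add_left scale_left)
qed

lemma diff_right: "B x (y - z) = B x y - B x z"
proof -
  have "B x (y - z) = B x (y + scaleC (-1) z)" by (simp add: scaleC_minus1)
  then show ?thesis by (simp add: add_right scale_right)
qed

lemma zero_left[simp]: "B 0 y = 0"
  using add_left[of 0 0 y] by simp

lemma zero_right[simp]: "B x 0 = 0"
  using add_right[of x 0 0] by simp

lemma self_real: "Im (B x x) = 0"
proof -
  have h: "B x x = cnj (B x x)" by (rule herm)
  have "Im (B x x) = Im (cnj (B x x))" using h by (rule arg_cong)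
  then have "Im (B x x) = - Im (B x x)" by simp
  then show ?thesis by simp
qed

lemma self_of_real: "B x x = of_real (Re (B x x))"
  using self_real by (simp add: complex_eq_iff)

lemma sum_left: "B (\<Sum>i\<in>I. f i) y = (\<Sum>i\<in>I. B (f i) y)"
  by (induction I rule: infinite_finite_induct) (auto simp: add_left)

lemma expand: "Re (B (x - scaleC t y) (x - scaleC t y))
   = Re (B x x) - 2 * Re (cnj t * B x y) + (cmod t)^2 * Re (B y y)"
proof -
  have e: "B (x - scaleC t y) (x - scaleC t y) = B x x - cnj t * B x y - t * B y x + t * (cnj t * B y y)"
    by (simp add: diff_left diff_right scale_left scale_right right_diff_distrib)
  have h1: "Re (t * B y x) = Re (cnj t * B x y)"
  proof -
    have "t * B y x = cnj (cnj t * B x y)" by (simp add: herm[of y x])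
    then show ?thesis by (metis cnj.simps(1))
  qed
  have h2: "Re (t * (cnj t * B y y)) = (cmod t)^2 * Re (B y y)"
  proof -
    have "t * (cnj t * B y y) = (t * cnj t) * of_real (Re (B y y))"
      by (subst self_of_real) simp
    also have "t * cnj t = of_real ((cmod t)^2)" by (rule complex_norm_square[symmetric])
    finally show ?thesis by (simp only: of_real_mult[symmetric] Re_complex_of_real)
  qed
  show ?thesis unfolding e using h1 h2 by simp
qed

lemma CS: "(cmod (B x y))^2 \<le> Re (B x x) * Re (B y y)"
proof (cases "Re (B y y) > 0")
  case True
  let ?b = "Re (B y y)" and ?c = "B x y"
  define t where "t = ?c / of_real ?b"
  have "0 \<le> Re (B (x - scaleC t y) (x - scaleC t y))" by (rule nonneg)
  also have "\<dots> = Re (B x x) - 2 * Re (cnj t * ?c) + (cmod t)^2 * ?b" by (rule expand)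
  also have "cnj t * ?c = of_real ((cmod ?c)^2 / ?b)"
  proof -
    have "cnj ?c * ?c = of_real ((cmod ?c)^2)" by (rule trans[OF mult.commute complex_norm_square[symmetric]])
    then show ?thesis unfolding t_def by simp
  qed
  also have "(cmod t)^2 * ?b = (cmod ?c)^2 / ?b"
    unfolding t_def using True by (simp add: norm_divide power_divide power2_eq_square)
  finally have "0 \<le> Re (B x x) - (cmod ?c)^2 / ?b" by simp
  then show ?thesis using True by (simp add: field_simps)
next
  case False
  then have b0: "Re (B y y) = 0" using nonneg[of y] by simp
  show ?thesis
  proof (rule ccontr)
    assume "\<not> ?thesis"
    then have c0: "cmod (B x y) > 0" using b0 by simp
    define r where "r = (Re (B x x) + 1) / (2 * (cmod (B x y))^2)"
    define t where "t = of_real r * B x y"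
    have "0 \<le> Re (B (x - scaleC t y) (x - scaleC t y))" by (rule nonneg)
    also have "\<dots> = Re (B x x) - 2 * Re (cnj t * B x y)" using expand b0 by simp
    also have "cnj t * B x y = of_real (r * (cmod (B x y))^2)"
    proof -
      have 1: "cnj (B x y) * B x y = of_real ((cmod (B x y))^2)" by (rule trans[OF mult.commute complex_norm_square[symmetric]])
      have "cnj t = of_real r * cnj (B x y)" unfolding t_def by simp
      then have "cnj t * B x y = of_real r * (cnj (B x y) * B x y)" by (simp only: mult.assoc)
      also have "\<dots> = of_real (r * (cmod (B x y))^2)" by (simp only: 1 of_real_mult)
      finally show ?thesis .
    qed
    also have "r * (cmod (B x y))^2 = (Re (B x x) + 1) / 2" unfolding r_def using c0 by simp
    finally show False by simp
  qed
qed

lemma CS': "cmod (B x y) \<le> sqrt (Re (B x x)) * sqrt (Re (B y y))"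
proof -
  have "cmod (B x y) = sqrt ((cmod (B x y))^2)" by simp
  also have "\<dots> \<le> sqrt (Re (B x x) * Re (B y y))" using CS by (rule real_sqrt_le_mono)
  finally show ?thesis by (simp add: real_sqrt_mult)
qed

lemma triangle: "sqrt (Re (B (x + y) (x + y))) \<le> sqrt (Re (B x x)) + sqrt (Re (B y y))"
proof -
  have "Re (B (x+y) (x+y)) = Re (B x x) + Re (B y y) + Re (B x y) + Re (B y x)"
    by (simp add: add_left add_right)
  also have "Re (B y x) = Re (B x y)" by (subst herm) simp
  also have "Re (B x y) \<le> sqrt (Re (B x x)) * sqrt (Re (B y y))"
    using CS' complex_Re_le_cmod order_trans by blast
  finally have "Re (B (x+y) (x+y)) \<le> (sqrt (Re (B x x)) + sqrt (Re (B y y)))^2"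
    using nonneg[of x] nonneg[of y] by (simp add: power2_eq_square algebra_simps)
  then show ?thesis
    using nonneg[of x] nonneg[of y] by (intro real_le_lsqrt) auto
qed

end

lemma cinner_psd: "psd_form (cinner :: 'a::complex_inner \<Rightarrow> 'a \<Rightarrow> complex)"
  by unfold_locales (rule cinner_add_left, rule cinner_scaleC_left, rule cinner_commute, rule cinner_self_nonneg)

interpretation ci: psd_form "cinner :: 'a::complex_inner \<Rightarrow> 'a \<Rightarrow> complex"
  by (rule cinner_psd)

lemma norm_sq_cinner: "(norm x)^2 = Re (cinner x x)"
  by (metis norm_eq_sqrt_cinner cinner_self_nonneg real_sqrt_pow2)

lemma cinner_eq_norm_sq: "cinner x x = of_real ((norm x)^2)"
  using ci.self_of_real norm_sq_cinner by metis

lemma norm_scaleC: "norm (scaleC c (x::'a::complex_inner)) = cmod c * norm x"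
proof -
  have "Re (cinner (scaleC c x) (scaleC c x)) = (cmod c)^2 * Re (cinner x x)"
    apply (simp add: ci.scale_left ci.scale_right)
    apply (subst ci.self_of_real)
    by (simp add: cmod_def algebra_simps power2_eq_square)
  then show ?thesis
    by (simp add: norm_eq_sqrt_cinner real_sqrt_mult)
qed

lemma cinner_CS: "cmod (cinner x y) \<le> norm x * norm (y::'a::complex_inner)"
  using ci.CS'[of x y] by (simp add: norm_eq_sqrt_cinner)

lemma norm_add_sq: "(norm (x + y))^2 = (norm x)^2 + (norm y)^2 + 2 * Re (cinner x (y::'a::complex_inner))"
proof -
  have "Re (cinner y x) = Re (cinner x y)" by (subst ci.herm) simp
  then show ?thesis
    by (simp add: norm_sq_cinner ci.add_left ci.add_right)
qed

lemma norm_diff_sq: "(norm (x - y))^2 = (norm x)^2 + (norm y)^2 - 2 * Re (cinner x (y::'a::complex_inner))"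
proof -
  have "cinner x (-y) = - cinner x y" by (simp add: ci.scale_right flip: scaleC_minus1)
  then show ?thesis using norm_add_sq[of x "-y"] by simp
qed



lemma bl_cinner_left: "bounded_linear (\<lambda>z. cinner z (w::'a::complex_inner))"
proof (rule bounded_linear_intro[where K="norm w"])
  show "cinner (x + y) w = cinner x w + cinner y w" for x y by (rule cinner_add_left)
  show "cinner (scaleR r x) w = scaleR r (cinner x w)" for r x
    by (simp add: scaleR_scaleC cinner_scaleC_left scaleR_conv_of_real)
  show "norm (cinner x w) \<le> norm x * norm w" for x by (rule cinner_CS)
qed

lemma bl_cinner_right: "bounded_linear (\<lambda>z. cinner (w::'a::complex_inner) z)"
proof (rule bounded_linear_intro[where K="norm w"])
  show "cinner w (x + y) = cinner w x + cinner w y" for x y by (rule ci.add_right)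
  show "cinner w (scaleR r x) = scaleR r (cinner w x)" for r x
    by (simp add: scaleR_scaleC ci.scale_right scaleR_conv_of_real)
  show "norm (cinner w x) \<le> norm x * norm w" for x using cinner_CS[of w x] by (simp add: mult.commute)
qed

lemma bl_scaleC: "bounded_linear (\<lambda>x. scaleC c (x::'a::complex_inner))"
proof (rule bounded_linear_intro[where K="cmod c"])
  show "scaleC c (x + y) = scaleC c x + scaleC c y" for x y :: 'a by (rule scaleC_add_right)
  show "scaleC c (scaleR r x) = scaleR r (scaleC c x)" for r and x :: 'a
    by (simp add: scaleR_scaleC scaleC_scaleC mult.commute)
  show "norm (scaleC c x) \<le> norm x * cmod c" for x :: 'a by (simp add: norm_scaleC mult.commute)
qed

definition csubspace :: "'a::complex_vector set \<Rightarrow> bool" where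
  "csubspace M \<longleftrightarrow> 0 \<in> M \<and> (\<forall>x\<in>M. \<forall>y\<in>M. x + y \<in> M) \<and> (\<forall>c. \<forall>x\<in>M. scaleC c x \<in> M)"

lemma csubspace_diff: "csubspace M \<Longrightarrow> x \<in> M \<Longrightarrow> y \<in> M \<Longrightarrow> x - y \<in> M"
proof -
  assume a: "csubspace M" "x \<in> M" "y \<in> M"
  then have "x + scaleC (-1) y \<in> M" unfolding csubspace_def by blast
  then show ?thesis by (simp add: scaleC_minus1)
qed

lemma csubspace_closure:
  fixes M :: "'a::complex_inner set"
  assumes "csubspace M"
  shows "csubspace (closure M)"
proof -
  have add1: "a + x \<in> closure M" if "a \<in> M" "x \<in> closure M" for a x
  proof -
    have "(\<lambda>x. a + x) ` closure M \<subseteq> closure M"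
      apply (rule image_closure_subset)
      using assms that closure_subset unfolding csubspace_def
      by (auto intro!: continuous_intros)
    then show ?thesis using that by auto
  qed
  have add2: "x + b \<in> closure M" if "b \<in> closure M" "x \<in> closure M" for x b
  proof -
    have "(\<lambda>x. x + b) ` closure M \<subseteq> closure M"
      apply (rule image_closure_subset)
      using add1 that by (auto intro!: continuous_intros simp: add.commute)
    then show ?thesis using that by auto
  qed
  have sc: "scaleC c x \<in> closure M" if "x \<in> closure M" for c x
  proof -
    have "(\<lambda>x. scaleC c x) ` closure M \<subseteq> closure M"
    proof (rule image_closure_subset)
      show "continuous_on (closure M) (\<lambda>x. scaleC c x)" by (intro linear_continuous_on bl_scaleC)
      show "(\<lambda>x. scaleC c x) ` M \<subseteq> closure M"
        using assms closure_subset unfolding csubspace_def by blast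
    qed simp
    then show ?thesis using that by auto
  qed
  show ?thesis using add2 sc assms closure_subset unfolding csubspace_def by blast
qed

lemma orth_from_min:
  fixes u w :: "'a::complex_inner"
  assumes "\<And>t. (norm u)^2 \<le> (norm (u - scaleC t w))^2"
  shows "cinner u w = 0"
proof (cases "w = 0")
  case True then show ?thesis by simp
next
  case False
  define b where "b = (norm w)^2"
  let ?c = "cinner u w" and ?b = "b"
  have b: "?b > 0" using False unfolding b_def by simp
  have cb: "cmod (of_real ?b) = ?b" using b by simp
  define t where "t = ?c / of_real ?b"
  have "(norm u)^2 \<le> Re (cinner (u - scaleC t w) (u - scaleC t w))"
    using assms[of t] by (simp add: norm_sq_cinner)
  also have "\<dots> = Re (cinner u u) - 2 * Re (cnj t * ?c) + (cmod t)^2 * Re (cinner w w)"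
    by (rule ci.expand)
  also have "Re (cinner w w) = ?b" unfolding b_def by (simp add: norm_sq_cinner)
  also have "cnj t * ?c = of_real ((cmod ?c)^2 / ?b)"
  proof -
    have "cnj ?c * ?c = of_real ((cmod ?c)^2)" by (rule trans[OF mult.commute complex_norm_square[symmetric]])
    then show ?thesis unfolding t_def by simp
  qed
  also have "(cmod t)^2 = (cmod ?c)^2 / ?b^2"
    unfolding t_def by (simp only: norm_divide cb power_divide)
  finally have "(norm u)^2 \<le> (norm u)^2 - 2 * ((cmod ?c)^2 / ?b) + (cmod ?c)^2 / ?b^2 * ?b"
    by (simp add: norm_sq_cinner)
  also have "(cmod ?c)^2 / ?b^2 * ?b = (cmod ?c)^2 / ?b" using b by (simp add: power2_eq_square)
  finally have "(cmod ?c)^2 / ?b \<le> 0" by simp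
  then have "(cmod ?c)^2 \<le> 0" using b by (simp add: divide_le_0_iff)
  then show ?thesis by simp
qed

lemma parallelogram: "(norm (a + b))^2 + (norm (a - b))^2 = 2 * (norm a)^2 + 2 * (norm (b::'a::complex_inner))^2"
  by (simp add: norm_add_sq norm_diff_sq)

lemma exists_near:
  fixes A :: "'a::metric_space set"
  assumes "A \<noteq> {}" "e > 0"
  shows "\<exists>a\<in>A. dist x a < infdist x A + e"
proof (rule ccontr)
  assume "\<not> ?thesis"
  then have "\<forall>a\<in>A. infdist x A + e \<le> dist x a" by (auto simp: not_less)
  then have "infdist x A + e \<le> infdist x A"
    unfolding infdist_notempty[OF assms(1)] using assms(1) by (intro cINF_greatest) auto
  then show False using assms by simp
qed

lemma proj_exists:
  fixes M :: "'a::chilbert_space set"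
  assumes cs: "csubspace M" and cl: "closed M"
  shows "\<exists>m\<in>M. \<forall>w\<in>M. cinner (x - m) w = 0"
proof -
  have ne: "M \<noteq> {}" using cs unfolding csubspace_def by auto
  let ?d = "infdist x M"
  define e :: "nat \<Rightarrow> real" where "e j = inverse (real (Suc j))" for j
  have epos: "e j > 0" for j unfolding e_def by simp
  have "\<forall>j. \<exists>a\<in>M. dist x a < ?d + e j" using exists_near[OF ne epos] by blast
  then obtain m where mM: "\<And>j. m j \<in> M" and md: "\<And>j. dist x (m j) < ?d + e j" by metis
  have dle: "?d \<le> norm (x - a)" if "a \<in> M" for a using infdist_le[OF that, of x] by (simp add: dist_norm)
  have d0: "?d \<ge> 0" by (rule infdist_nonneg)
  have par: "(norm (m i - m j))^2 \<le> 2 * (?d + e i)^2 + 2 * (?d + e j)^2 - 4 * ?d^2" for i j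
  proof -
    let ?a = "x - m i" and ?b = "x - m j"
    have pl: "(norm (?a + ?b))^2 + (norm (?a - ?b))^2 = 2 * (norm ?a)^2 + 2 * (norm ?b)^2"
      by (rule parallelogram)
    have "?a + ?b = scaleR 2 (x - scaleR (1/2) (m i + m j))"
      by (simp add: algebra_simps scaleR_2)
    then have "norm (?a + ?b) = 2 * norm (x - scaleR (1/2) (m i + m j))" by simp
    moreover have "scaleR (1/2) (m i + m j) \<in> M"
      using cs mM unfolding csubspace_def scaleR_scaleC by blast
    ultimately have "2 * ?d \<le> norm (?a + ?b)" using dle by simp
    then have "(2 * ?d)^2 \<le> (norm (?a + ?b))^2"
      using d0 by (intro power_mono) auto
    then have "4 * ?d^2 \<le> (norm (?a + ?b))^2" by (simp add: power2_eq_square)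
    moreover have "?a - ?b = m j - m i" by simp
    moreover have "norm ?a \<le> ?d + e i" using md[of i] by (simp add: dist_norm)
    then have "(norm ?a)^2 \<le> (?d + e i)^2" by (simp add: power_mono)
    moreover have "norm ?b \<le> ?d + e j" using md[of j] by (simp add: dist_norm)
    then have "(norm ?b)^2 \<le> (?d + e j)^2" by (simp add: power_mono)
    ultimately show ?thesis using pl by (simp add: norm_minus_commute)
  qed
  have "Cauchy m"
  proof (rule metric_CauchyI)
    fix eps :: real assume "eps > 0"
    obtain N :: nat where N: "(8 * ?d + 4) / eps^2 < real N" using reals_Archimedean2 by blast
    have "(8 * ?d + 4) / eps^2 > 0" using d0 \<open>eps > 0\<close> by (intro divide_pos_pos) auto
    then have Npos: "real N > 0" using N by linarith
    have "\<forall>i\<ge>N. \<forall>j\<ge>N. dist (m i) (m j) < eps"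
    proof (intro allI impI)
      fix i j assume "N \<le> i" "N \<le> j"
      have ei: "e i \<le> 1 / real N" "e i \<le> 1"
        using \<open>N \<le> i\<close> Npos unfolding e_def by (auto simp: field_simps)
      have ej: "e j \<le> 1 / real N" "e j \<le> 1"
        using \<open>N \<le> j\<close> Npos unfolding e_def by (auto simp: field_simps)
      have "(norm (m i - m j))^2 \<le> 4 * ?d * (e i + e j) + 2 * (e i)^2 + 2 * (e j)^2"
        using par[of i j] by (simp add: power2_eq_square algebra_simps)
      also have "\<dots> \<le> 4 * ?d * (2 / real N) + 2 * (1 / real N) + 2 * (1 / real N)"
      proof -
        have "(e i)^2 \<le> e i" using ei epos[of i] by (simp add: power2_eq_square mult_le_cancel_left1)
        moreover have "(e j)^2 \<le> e j" using ej epos[of j] by (simp add: power2_eq_square mult_le_cancel_left1)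
        moreover have "4 * ?d * (e i + e j) \<le> 4 * ?d * (2 / real N)"
          using ei ej d0 by (intro mult_left_mono) auto
        ultimately show ?thesis using ei ej by linarith
      qed
      also have "\<dots> = (8 * ?d + 4) / real N" using Npos by (simp add: field_simps)
      also have "\<dots> < eps^2" using N Npos \<open>eps > 0\<close> by (simp add: field_simps)
      finally have "(norm (m i - m j))^2 < eps^2" .
      then have "norm (m i - m j) < eps" using \<open>eps > 0\<close> by (simp add: power_less_imp_less_base)
      then show "dist (m i) (m j) < eps" by (simp add: dist_norm)
    qed
    then show "\<exists>N. \<forall>i\<ge>N. \<forall>j\<ge>N. dist (m i) (m j) < eps" by blast
  qed
  then obtain p where lim: "m \<longlonglongrightarrow> p" using Cauchy_convergent_iff convergent_def by blast
  have pM: "p \<in> M" using closed_sequentially[OF cl mM lim] .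
  have "(\<lambda>j. norm (x - m j)) \<longlonglongrightarrow> norm (x - p)" by (intro tendsto_intros lim)
  moreover have "(\<lambda>j. ?d + e j) \<longlonglongrightarrow> ?d + 0"
    unfolding e_def by (intro tendsto_intros LIMSEQ_inverse_real_of_nat)
  ultimately have "norm (x - p) \<le> ?d + 0"
    by (rule LIMSEQ_le) (use md in \<open>auto simp: dist_norm less_imp_le\<close>)
  then have pmin: "norm (x - p) \<le> norm (x - a)" if "a \<in> M" for a using dle[OF that] by simp
  have "cinner (x - p) w = 0" if "w \<in> M" for w
  proof (rule orth_from_min)
    fix t
    have "p + scaleC t w \<in> M" using cs pM that unfolding csubspace_def by blast
    then have "norm (x - p) \<le> norm (x - (p + scaleC t w))" by (rule pmin)
    then show "(norm (x - p))^2 \<le> (norm (x - p - scaleC t w))^2"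
      by (simp add: power_mono algebra_simps)
  qed
  then show ?thesis using pM by blast
qed



definition proj :: "'a::chilbert_space set \<Rightarrow> 'a \<Rightarrow> 'a" where
  "proj M x = (SOME m. m \<in> M \<and> (\<forall>w\<in>M. cinner (x - m) w = 0))"

lemma cinner_self_zero_imp: "cinner x x = 0 \<Longrightarrow> x = 0"
  using cinner_self_eq_zero by blast

lemma proj_unique:
  fixes M :: "'a::complex_inner set"
  assumes "csubspace M" "m1 \<in> M" "\<forall>w\<in>M. cinner (x - m1) w = 0"
    "m2 \<in> M" "\<forall>w\<in>M. cinner (x - m2) w = 0"
  shows "m1 = m2"
proof -
  have d: "m1 - m2 \<in> M" using assms csubspace_diff by blast
  have "cinner (m1 - m2) (m1 - m2) = cinner ((x - m2) - (x - m1)) (m1 - m2)" by simp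
  also have "\<dots> = cinner (x - m2) (m1 - m2) - cinner (x - m1) (m1 - m2)" by (rule ci.diff_left)
  also have "\<dots> = 0" using assms d by simp
  finally show ?thesis using cinner_self_zero_imp by force
qed

lemma proj_props:
  fixes M :: "'a::chilbert_space set"
  assumes "csubspace M" "closed M"
  shows "proj M x \<in> M" "\<forall>w\<in>M. cinner (x - proj M x) w = 0"
proof -
  have "\<exists>m. m \<in> M \<and> (\<forall>w\<in>M. cinner (x - m) w = 0)" using proj_exists[OF assms] by blast
  then have "proj M x \<in> M \<and> (\<forall>w\<in>M. cinner (x - proj M x) w = 0)"
    unfolding proj_def by (rule someI_ex)
  then show "proj M x \<in> M" "\<forall>w\<in>M. cinner (x - proj M x) w = 0" by auto
qed

lemma proj_char:
  fixes M :: "'a::chilbert_space set"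
  assumes "csubspace M" "closed M" "m \<in> M" "\<forall>w\<in>M. cinner (x - m) w = 0"
  shows "proj M x = m"
  using proj_unique[OF assms(1) proj_props[OF assms(1,2)] assms(3,4)] by blast

lemma proj_add:
  fixes M :: "'a::chilbert_space set"
  assumes cs: "csubspace M" and cl: "closed M"
  shows "proj M (x + y) = proj M x + proj M y"
proof (rule proj_char[OF cs cl])
  show "proj M x + proj M y \<in> M" using proj_props[OF cs cl] cs unfolding csubspace_def by blast
  show "\<forall>w\<in>M. cinner (x + y - (proj M x + proj M y)) w = 0"
  proof
    fix w assume w: "w \<in> M"
    have "x + y - (proj M x + proj M y) = (x - proj M x) + (y - proj M y)" by simp
    then have "cinner (x + y - (proj M x + proj M y)) w = cinner (x - proj M x) w + cinner (y - proj M y) w"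
      by (simp only: cinner_add_left)
    then show "cinner (x + y - (proj M x + proj M y)) w = 0"
      using proj_props(2)[OF cs cl, of x] proj_props(2)[OF cs cl, of y] w by simp
  qed
qed

lemma proj_scale:
  fixes M :: "'a::chilbert_space set"
  assumes cs: "csubspace M" and cl: "closed M"
  shows "proj M (scaleC c x) = scaleC c (proj M x)"
proof (rule proj_char[OF cs cl])
  show "scaleC c (proj M x) \<in> M" using proj_props[OF cs cl] cs unfolding csubspace_def by blast
  show "\<forall>w\<in>M. cinner (scaleC c x - scaleC c (proj M x)) w = 0"
  proof
    fix w assume w: "w \<in> M"
    have "scaleC c x - scaleC c (proj M x) = scaleC c (x - proj M x)" by (simp add: scaleC_diff_right)
    then show "cinner (scaleC c x - scaleC c (proj M x)) w = 0"
      using proj_props(2)[OF cs cl, of x] w by (simp add: cinner_scaleC_left)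
  qed
qed

lemma proj_norm:
  fixes M :: "'a::chilbert_space set"
  assumes cs: "csubspace M" and cl: "closed M"
  shows "norm (proj M x) \<le> norm x"
proof -
  let ?p = "proj M x"
  have o: "cinner (x - ?p) ?p = 0" using proj_props[OF cs cl] by blast
  have o2: "cinner ?p (x - ?p) = 0" using o by (subst ci.herm) simp
  have "(norm x)^2 = (norm (?p + (x - ?p)))^2" by simp
  also have "\<dots> = (norm ?p)^2 + (norm (x - ?p))^2" using o2 by (simp only: norm_add_sq) simp
  finally have "(norm ?p)^2 \<le> (norm x)^2" by simp
  then show ?thesis by (simp add: power2_le_iff_abs_le)
qed

lemma cblinear_intro:
  fixes T :: "'a::complex_inner \<Rightarrow> 'a"
  assumes "\<And>x y. T (x + y) = T x + T y" "\<And>c x. T (scaleC c x) = scaleC c (T x)"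
    "\<And>x. norm (T x) \<le> norm x * K"
  shows "cblinear T"
  unfolding cblinear_def
proof
  show "bounded_linear T"
    by (rule bounded_linear_intro[OF assms(1) _ assms(3)]) (simp add: scaleR_scaleC assms(2))
qed (simp add: assms(2))

lemma cblinear_bl: "cblinear T \<Longrightarrow> bounded_linear T"
  unfolding cblinear_def by blast

lemma cblinear_scale: "cblinear T \<Longrightarrow> T (scaleC c x) = scaleC c (T x)"
  unfolding cblinear_def by blast

lemma cblinear_add: "cblinear T \<Longrightarrow> T (x + y) = T x + T y"
  unfolding cblinear_def using linear_simps(1) by blast

lemma cblinear_diff: "cblinear T \<Longrightarrow> T (x - y) = T x - T y"
  unfolding cblinear_def using linear_simps(2) by blast

lemma cblinear_zero: "cblinear T \<Longrightarrow> T 0 = 0"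
  unfolding cblinear_def using linear_simps(3) by blast

lemma cblinear_sum: "cblinear T \<Longrightarrow> T (\<Sum>i\<in>I. f i) = (\<Sum>i\<in>I. T (f i))"
  by (induction I rule: infinite_finite_induct) (auto simp: cblinear_add cblinear_zero)

lemma cblinear_comp: "cblinear S \<Longrightarrow> cblinear T \<Longrightarrow> cblinear (S \<circ> T)"
  unfolding cblinear_def using bounded_linear_compose by (auto simp: o_def)

lemma cblinear_id: "cblinear (\<lambda>x. x)"
  unfolding cblinear_def using bounded_linear_ident by auto

lemma cblinear_pow: "cblinear T \<Longrightarrow> cblinear (T ^^ n)"
  by (induction n) (auto simp: cblinear_id[unfolded id_def[symmetric]] cblinear_comp)

lemma cblinear_proj:
  fixes M :: "'a::chilbert_space set"
  assumes cs: "csubspace M" and cl: "closed M"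
  shows "cblinear (proj M)"
  by (rule cblinear_intro[where K=1]) (auto simp: proj_add[OF cs cl] proj_scale[OF cs cl] proj_norm[OF cs cl])

lemma riesz:
  fixes f :: "'a::chilbert_space \<Rightarrow> complex"
  assumes bl: "bounded_linear f" and sc: "\<And>c x. f (scaleC c x) = c * f x"
  shows "\<exists>v. \<forall>x. f x = cinner x v"
proof (cases "\<forall>x. f x = 0")
  case True
  then show ?thesis by (intro exI[of _ 0]) simp
next
  case False
  then obtain x0 where x0: "f x0 \<noteq> 0" by blast
  let ?K = "{x. f x = 0}"
  have clK: "closed ?K"
    using bl by (intro closed_Collect_eq) (auto intro: linear_continuous_on continuous_on_const)
  have csK: "csubspace ?K"
    unfolding csubspace_def using bl sc by (auto simp: linear_simps(3) linear_simps(1))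
  define z where "z = x0 - proj ?K x0"
  have pK: "f (proj ?K x0) = 0" using proj_props(1)[OF csK clK] by simp
  have orth: "cinner z w = 0" if "f w = 0" for w
    using proj_props(2)[OF csK clK, of x0] that unfolding z_def by simp
  have fz: "f z = f x0" unfolding z_def using pK bl by (simp add: linear_simps(2))
  then have fz0: "f z \<noteq> 0" using x0 by simp
  have zz: "cinner z z \<noteq> 0"
  proof
    assume "cinner z z = 0"
    then have "z = 0" by (rule cinner_self_zero_imp)
    then show False using fz0 bl by (simp add: linear_simps(3))
  qed
  have zzr: "cnj (cinner z z) = cinner z z" by (metis ci.herm)
  define v where "v = scaleC (cnj (f z) / cinner z z) z"
  have "f x = cinner x v" for x
  proof -
    define u where "u = scaleC (f x) z - scaleC (f z) x"
    have "f u = f x * f z - f z * f x"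
      unfolding u_def using bl sc by (simp add: linear_simps(2))
    then have "f u = 0" by simp
    then have "cinner z u = 0" by (rule orth)
    then have "cnj (f x) * cinner z z - cnj (f z) * cinner z x = 0"
      unfolding u_def by (simp add: ci.diff_right ci.scale_right)
    then have "cnj (cnj (f x) * cinner z z - cnj (f z) * cinner z x) = 0" by simp
    then have "f x * cinner z z = f z * cinner x z"
      using zzr by (simp add: ci.herm[of x z])
    then show ?thesis
      unfolding v_def using zz zzr by (simp add: ci.scale_right field_simps)
  qed
  then show ?thesis by blast
qed

lemma adj_exists:
  fixes S :: "'a::chilbert_space \<Rightarrow> 'a"
  assumes "cblinear S"
  shows "\<exists>S'. \<forall>x y. cinner (S x) y = cinner x (S' y)"
proof -
  have "\<forall>y. \<exists>v. \<forall>x. cinner (S x) y = cinner x v"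
  proof
    fix y
    show "\<exists>v. \<forall>x. cinner (S x) y = cinner x v"
    proof (rule riesz)
      show "bounded_linear (\<lambda>x. cinner (S x) y)"
        using bounded_linear_compose[OF bl_cinner_left cblinear_bl[OF assms]] by (simp add: o_def)
      show "cinner (S (scaleC c x)) y = c * cinner (S x) y" for c x
        using assms by (simp add: cblinear_scale cinner_scaleC_left)
    qed
  qed
  then show ?thesis by metis
qed

lemma adj_prop:
  fixes S :: "'a::chilbert_space \<Rightarrow> 'a"
  assumes "cblinear S"
  shows "cinner (S x) y = cinner x (adj S y)"
proof -
  have "\<exists>!S'. \<forall>x y. cinner (S x) y = cinner x (S' y)"
  proof (rule ex_ex1I)
    show "\<exists>S'. \<forall>x y. cinner (S x) y = cinner x (S' y)" by (rule adj_exists[OF assms])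
  next
    fix S1 S2 assume a: "\<forall>x y. cinner (S x) y = cinner x (S1 y)" "\<forall>x y. cinner (S x) y = cinner x (S2 y)"
    show "S1 = S2"
    proof
      fix y
      have "cinner (S1 y - S2 y) (S1 y - S2 y) = 0"
        using a by (simp add: ci.diff_right)
      then show "S1 y = S2 y" using cinner_self_zero_imp by force
    qed
  qed
  then have "\<forall>x y. cinner (S x) y = cinner x (adj S y)"
    unfolding adj_def by (rule theI')
  then show ?thesis by blast
qed



lemma pos_cblinear: "positive_op A \<Longrightarrow> cblinear A"
  unfolding positive_op_def by blast

lemma pos_selfadj:
  fixes A :: "'a::complex_inner \<Rightarrow> 'a"
  assumes pA: "positive_op A"
  shows "cinner (A x) y = cinner x (A y)"
proof -
  have cA: "cblinear A" using pA by (rule pos_cblinear)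
  have P: "cinner (A z) z = cinner z (A z)" for z
  proof -
    have "Im (cinner (A z) z) = 0" using pA unfolding positive_op_def by blast
    then have "cnj (cinner (A z) z) = cinner (A z) z" by (simp add: complex_eq_iff)
    moreover have "cinner z (A z) = cnj (cinner (A z) z)" by (rule ci.herm)
    ultimately show ?thesis by simp
  qed
  define a where "a = cinner (A x) y - cinner x (A y)"
  define b where "b = cinner (A y) x - cinner y (A x)"
  have "cinner (A (x + y)) (x + y) = cinner (x + y) (A (x + y))" by (rule P)
  then have "cinner (A x) x + cinner (A x) y + cinner (A y) x + cinner (A y) y
      = cinner x (A x) + cinner x (A y) + cinner y (A x) + cinner y (A y)"
    by (simp add: cblinear_add[OF cA] cinner_add_left ci.add_right algebra_simps)
  then have e1: "a + b = 0" unfolding a_def b_def using P[of x] P[of y] by (simp add: algebra_simps)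
  have "cinner (A (x + scaleC \<i> y)) (x + scaleC \<i> y) = cinner (x + scaleC \<i> y) (A (x + scaleC \<i> y))" by (rule P)
  then have "cinner (A x) x - \<i> * cinner (A x) y + \<i> * cinner (A y) x + cinner (A y) y
      = cinner x (A x) - \<i> * cinner x (A y) + \<i> * cinner y (A x) + cinner y (A y)"
    by (simp add: cblinear_add[OF cA] cblinear_scale[OF cA] cinner_add_left ci.add_right
        cinner_scaleC_left ci.scale_right algebra_simps)
  then have e2: "\<i> * b - \<i> * a = 0" unfolding a_def b_def using P[of x] P[of y] by (simp add: algebra_simps)
  from e1 have "b = - a" by (metis add.commute eq_neg_iff_add_eq_0)
  with e2 have "a = 0" by simp
  then show ?thesis unfolding a_def by simp
qed

lemma innerA_psd:
  assumes pA: "positive_op A"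
  shows "psd_form (inner_A (A::'a::complex_inner \<Rightarrow> 'a))"
proof
  have cA: "cblinear A" using pA by (rule pos_cblinear)
  show "inner_A A (x + y) z = inner_A A x z + inner_A A y z" for x y z
    unfolding inner_A_def by (simp add: cblinear_add[OF cA] cinner_add_left)
  show "inner_A A (scaleC c x) y = c * inner_A A x y" for c x y
    unfolding inner_A_def by (simp add: cblinear_scale[OF cA] cinner_scaleC_left)
  show "inner_A A x y = cnj (inner_A A y x)" for x y
    unfolding inner_A_def by (simp add: pos_selfadj[OF pA, of x y] ci.herm[of x "A y"])
  show "0 \<le> Re (inner_A A x x)" for x
    using pA unfolding positive_op_def inner_A_def by blast
qed

lemma csubspace_range: "cblinear A \<Longrightarrow> csubspace (range A)"
proof -
  assume cA: "cblinear A"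
  have "0 \<in> range A" using cblinear_zero[OF cA] by (metis rangeI)
  moreover have "A x + A y \<in> range A" for x y using cblinear_add[OF cA, of x y] by (metis rangeI)
  moreover have "scaleC c (A x) \<in> range A" for c x using cblinear_scale[OF cA, of c x] by (metis rangeI)
  ultimately show ?thesis unfolding csubspace_def by blast
qed

lemma orth_range_kernel:
  fixes A :: "'a::complex_inner \<Rightarrow> 'a"
  assumes pA: "positive_op A" and o: "\<And>u. cinner v (A u) = 0"
  shows "A v = 0"
proof -
  have "cinner (A v) (A v) = cinner v (A (A v))" by (rule pos_selfadj[OF pA])
  also have "\<dots> = 0" by (rule o)
  finally show ?thesis by (rule cinner_self_zero_imp)
qed

lemma closure_range_orth:
  fixes A :: "'a::complex_inner \<Rightarrow> 'a"
  assumes pA: "positive_op A" and d: "A d = 0" and m: "m \<in> closure (range A)"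
  shows "cinner m d = 0"
proof -
  have cl: "closed {m. cinner m d = 0}"
    by (intro closed_Collect_eq linear_continuous_on bl_cinner_left continuous_on_const)
  have "range A \<subseteq> {m. cinner m d = 0}"
  proof
    fix m assume "m \<in> range A"
    then obtain u where "m = A u" by blast
    then show "m \<in> {m. cinner m d = 0}" using pos_selfadj[OF pA, of u d] d by simp
  qed
  then have "closure (range A) \<subseteq> {m. cinner m d = 0}" using cl by (rule closure_minimal)
  then show ?thesis using m by blast
qed

lemma sharp_props:
  fixes A :: "'a::chilbert_space \<Rightarrow> 'a"
  assumes pA: "positive_op A" and T: "T \<in> B_A A"
  shows "cblinear (sharp_A A T)"
    and "\<And>y z. inner_A A (sharp_A A T y) z = inner_A A y (T z)"
proof -
  have cA: "cblinear A" using pA by (rule pos_cblinear)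
  obtain W where cT: "cblinear T" and cW: "cblinear W"
    and TW: "\<And>x y. inner_A A (T x) y = inner_A A x (W y)"
    using T unfolding B_A_def by blast
  let ?M = "closure (range A)"
  have csM: "csubspace ?M" by (rule csubspace_closure[OF csubspace_range[OF cA]])
  have clM: "closed ?M" by simp
  define X where "X = proj ?M \<circ> W"
  have cX: "cblinear X" unfolding X_def by (rule cblinear_comp[OF cblinear_proj[OF csM clM] cW])
  have rX: "range X \<subseteq> ?M" unfolding X_def using proj_props(1)[OF csM clM] by auto
  have AW: "A (W x) = adj T (A x)" for x
  proof -
    have "cinner y (A (W x) - adj T (A x)) = 0" for y
    proof -
      have "cinner y (A (W x)) = cinner (A y) (W x)" by (rule pos_selfadj[OF pA, symmetric])
      also have "\<dots> = inner_A A (T y) x" using TW unfolding inner_A_def by simp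
      also have "\<dots> = cinner (T y) (A x)" unfolding inner_A_def by (rule pos_selfadj[OF pA])
      also have "\<dots> = cinner y (adj T (A x))" by (rule adj_prop[OF cT])
      finally show ?thesis by (simp add: ci.diff_right)
    qed
    from this[of "A (W x) - adj T (A x)"] have "A (W x) - adj T (A x) = 0" by (rule cinner_self_zero_imp)
    then show ?thesis by simp
  qed
  have AX: "A (X x) = adj T (A x)" for x
  proof -
    let ?v = "W x - proj ?M (W x)"
    have "cinner ?v (A u) = 0" for u
    proof -
      have "A u \<in> ?M" by (meson closure_subset rangeI subsetD)
      then show ?thesis using proj_props(2)[OF csM clM, of "W x"] by blast
    qed
    then have "A ?v = 0" by (rule orth_range_kernel[OF pA])
    then have "A (W x) = A (proj ?M (W x))" by (simp add: cblinear_diff[OF cA])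
    then show ?thesis unfolding X_def using AW by simp
  qed
  have uniq: "Y = X" if "cblinear Y" "\<forall>x. A (Y x) = adj T (A x)" "range Y \<subseteq> ?M" for Y
  proof
    fix x
    let ?d = "Y x - X x"
    have Ad: "A ?d = 0" using that AX by (simp add: cblinear_diff[OF cA])
    have "Y x \<in> ?M" using that(3) by (meson rangeI subsetD)
    then have "cinner (Y x) ?d = 0" by (rule closure_range_orth[OF pA Ad])
    moreover have "X x \<in> ?M" using rX by (meson rangeI subsetD)
    then have "cinner (X x) ?d = 0" by (rule closure_range_orth[OF pA Ad])
    ultimately have "cinner ?d ?d = 0" by (simp add: ci.diff_left)
    then have "?d = 0" by (rule cinner_self_zero_imp)
    then show "Y x = X x" by simp
  qed
  have sX: "sharp_A A T = X"
    unfolding sharp_A_def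
  proof (rule the_equality)
    show "cblinear X \<and> (\<forall>x. A (X x) = adj T (A x)) \<and> range X \<subseteq> ?M" using cX AX rX by blast
  qed (use uniq in blast)
  show "cblinear (sharp_A A T)" using sX cX by simp
  show "inner_A A (sharp_A A T y) z = inner_A A y (T z)" for y z
  proof -
    have "inner_A A (sharp_A A T y) z = cinner (adj T (A y)) z" unfolding inner_A_def sX AX ..
    also have "\<dots> = cnj (cinner z (adj T (A y)))" by (rule ci.herm)
    also have "\<dots> = cnj (cinner (T z) (A y))" by (simp add: adj_prop[OF cT])
    also have "\<dots> = cinner (A y) (T z)" by (simp add: ci.herm[of "T z"])
    finally show ?thesis unfolding inner_A_def .
  qed
qed



lemma logconvex_pow:
  fixes f :: "nat \<Rightarrow> real"
  assumes nn: "\<And>m. f m \<ge> 0" and f0: "f 0 = 1"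
    and lc: "\<And>m. (f (Suc m))^2 \<le> f m * f (Suc (Suc m))"
  shows "f 1 ^ n \<le> f n"
proof -
  have step: "f 1 * f m \<le> f (Suc m)" for m
  proof (induction m)
    case 0 then show ?case using f0 by simp
  next
    case (Suc m)
    show ?case
    proof (cases "f (Suc m) = 0")
      case True then show ?thesis using nn by simp
    next
      case False
      then have pos: "f (Suc m) > 0" using nn[of "Suc m"] by simp
      have "f 1 * (f (Suc m))^2 \<le> f 1 * (f m * f (Suc (Suc m)))"
        by (rule mult_left_mono[OF lc[of m] nn[of 1]])
      also have "\<dots> = (f 1 * f m) * f (Suc (Suc m))" by simp
      also have "\<dots> \<le> f (Suc m) * f (Suc (Suc m))"
        using Suc.IH nn[of "Suc (Suc m)"] by (rule mult_right_mono)
      finally have "f (Suc m) * (f 1 * f (Suc m)) \<le> f (Suc m) * f (Suc (Suc m))"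
        by (simp add: power2_eq_square algebra_simps)
      then show ?thesis using pos by simp
    qed
  qed
  show ?thesis
  proof (induction n)
    case 0 then show ?case using f0 by simp
  next
    case (Suc n)
    have "f 1 ^ Suc n = f 1 * f 1 ^ n" by simp
    also have "\<dots> \<le> f 1 * f n" using Suc.IH nn[of 1] by (rule mult_left_mono)
    also have "\<dots> \<le> f (Suc n)" by (rule step)
    finally show ?case .
  qed
qed

lemma power_mean_sum:
  fixes a :: "nat \<Rightarrow> real" and I :: "nat set"
  assumes fin: "finite I" and ne: "I \<noteq> {}" and m: "m \<ge> 1"
  shows "(\<Sum>i\<in>I. a i) ^ (2 * m) \<le> real (card I) ^ (2 * m - 1) * (\<Sum>i\<in>I. a i ^ (2 * m))"
proof -
  let ?k = "real (card I)"
  have kpos: "?k > 0" using fin ne by (simp add: card_gt_0_iff)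
  have cv: "convex_on (UNIV::real set) (\<lambda>x. x ^ (2 * m))" by (rule convex_power_even) simp
  have "(\<lambda>x. x ^ (2 * m)) (\<Sum>i\<in>I. (1 / ?k) *\<^sub>R a i) \<le> (\<Sum>i\<in>I. (1 / ?k) * (\<lambda>x. x ^ (2 * m)) (a i))"
    by (rule convex_on_sum[OF fin ne cv]) (use kpos in auto)
  moreover have "(\<Sum>i\<in>I. (1 / ?k) *\<^sub>R a i) = (\<Sum>i\<in>I. a i) / ?k"
    by (simp add: sum_divide_distrib)
  moreover have "(\<Sum>i\<in>I. (1 / ?k) * a i ^ (2 * m)) = (\<Sum>i\<in>I. a i ^ (2 * m)) / ?k"
    by (simp add: sum_divide_distrib)
  ultimately have "((\<Sum>i\<in>I. a i) / ?k) ^ (2 * m) \<le> (\<Sum>i\<in>I. a i ^ (2 * m)) / ?k"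
    by simp
  then have "(\<Sum>i\<in>I. a i) ^ (2 * m) / ?k ^ (2 * m) \<le> (\<Sum>i\<in>I. a i ^ (2 * m)) / ?k"
    by (simp add: power_divide)
  then have "(\<Sum>i\<in>I. a i) ^ (2 * m) \<le> (\<Sum>i\<in>I. a i ^ (2 * m)) / ?k * ?k ^ (2 * m)"
    using kpos by (simp add: divide_le_eq)
  also have "?k ^ (2 * m) = ?k * ?k ^ (2 * m - 1)"
  proof -
    have "2 * m = Suc (2 * m - 1)" using m by simp
    then have "?k ^ (2 * m) = ?k ^ Suc (2 * m - 1)" by (rule arg_cong)
    then show ?thesis by (simp only: power_Suc)
  qed
  also have "(\<Sum>i\<in>I. a i ^ (2 * m)) / ?k * (?k * ?k ^ (2 * m - 1)) = ?k ^ (2 * m - 1) * (\<Sum>i\<in>I. a i ^ (2 * m))"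
    using kpos by simp
  finally show ?thesis .
qed

definition Abdd :: "('a::complex_inner \<Rightarrow> 'a) \<Rightarrow> ('a \<Rightarrow> 'a) \<Rightarrow> bool" where
  "Abdd A T \<longleftrightarrow> (\<exists>c\<ge>0. \<forall>x. norm_A A (T x) \<le> c * norm_A A x)"

lemma norm_A_sq: "positive_op A \<Longrightarrow> (norm_A A x)^2 = Re (inner_A A x x)"
proof -
  assume pA: "positive_op A"
  have "0 \<le> Re (inner_A A x x)" by (rule psd_form.nonneg[OF innerA_psd[OF pA]])
  then show ?thesis unfolding norm_A_def by simp
qed

lemma norm_A_nonneg: "positive_op A \<Longrightarrow> norm_A A x \<ge> 0"
proof -
  assume pA: "positive_op A"
  have "0 \<le> Re (inner_A A x x)" by (rule psd_form.nonneg[OF innerA_psd[OF pA]])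
  then show ?thesis unfolding norm_A_def by simp
qed

lemma A_bounded:
  fixes A T W :: "'a::chilbert_space \<Rightarrow> 'a"
  assumes pA: "positive_op A" and cT: "cblinear T" and cW: "cblinear W"
    and TW: "\<And>x y. inner_A A (T x) y = inner_A A x (W y)"
  shows "Abdd A T"
proof -
  interpret B: psd_form "inner_A A" by (rule innerA_psd[OF pA])
  define nA where "nA y = Re (inner_A A y y)" for y
  have nA0: "nA y \<ge> 0" for y unfolding nA_def by (rule B.nonneg)
  have WT: "inner_A A (W y) x = inner_A A y (T x)" for x y
  proof -
    have "inner_A A (W y) x = cnj (inner_A A x (W y))" by (rule B.herm)
    also have "\<dots> = cnj (inner_A A (T x) y)" by (simp only: TW)
    also have "\<dots> = inner_A A y (T x)" by (simp add: B.herm[of y "T x"])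
    finally show ?thesis .
  qed
  define M where "M = W \<circ> T"
  have cM: "cblinear M" unfolding M_def by (rule cblinear_comp[OF cW cT])
  have Msa: "inner_A A (M x) y = inner_A A x (M y)" for x y
    unfolding M_def by (simp add: WT TW)
  have Mpsa: "inner_A A ((M ^^ a) x) y = inner_A A x ((M ^^ a) y)" for a x y
  proof (induction a arbitrary: x y)
    case 0 then show ?case by simp
  next
    case (Suc a)
    have "inner_A A ((M ^^ Suc a) x) y = inner_A A (M ((M ^^ a) x)) y" by simp
    also have "\<dots> = inner_A A ((M ^^ a) x) (M y)" by (rule Msa)
    also have "\<dots> = inner_A A x ((M ^^ a) (M y))" by (rule Suc.IH)
    also have "(M ^^ a) (M y) = (M ^^ Suc a) y" by (simp add: funpow_swap1)
    finally show ?case .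
  qed
  have dbl: "inner_A A ((M ^^ (2 * a)) x) x = inner_A A ((M ^^ a) x) ((M ^^ a) x)" for a x
  proof -
    have "(M ^^ (2 * a)) x = (M ^^ a) ((M ^^ a) x)" by (simp add: mult_2 funpow_add)
    then show ?thesis using Mpsa[of a "(M ^^ a) x" x] by simp
  qed
  have key: "(nA ((M ^^ a) x))^2 \<le> nA ((M ^^ (2 * a)) x) * nA x" for a x
  proof -
    have "nA ((M ^^ a) x) = Re (inner_A A ((M ^^ (2 * a)) x) x)" unfolding nA_def dbl ..
    also have "\<dots> \<le> cmod (inner_A A ((M ^^ (2 * a)) x) x)" by (rule complex_Re_le_cmod)
    finally have "(nA ((M ^^ a) x))^2 \<le> (cmod (inner_A A ((M ^^ (2 * a)) x) x))^2"
      using nA0 by (intro power_mono) auto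
    also have "\<dots> \<le> nA ((M ^^ (2 * a)) x) * nA x" unfolding nA_def by (rule B.CS)
    finally show ?thesis .
  qed
  have g: "(nA (T x))^2 \<le> nA (M x) * nA x" for x
  proof -
    have e: "inner_A A (M x) x = inner_A A (T x) (T x)" unfolding M_def by (simp add: WT)
    have "nA (T x) = Re (inner_A A (M x) x)" unfolding nA_def e ..
    also have "\<dots> \<le> cmod (inner_A A (M x) x)" by (rule complex_Re_le_cmod)
    finally have "(nA (T x))^2 \<le> (cmod (inner_A A (M x) x))^2"
      using nA0 by (intro power_mono) auto
    also have "\<dots> \<le> nA (M x) * nA x" unfolding nA_def by (rule B.CS)
    finally show ?thesis .
  qed
  obtain KA where KA: "KA > 0" "\<And>y. norm (A y) \<le> norm y * KA"
    using bounded_linear.pos_bounded[OF cblinear_bl[OF pos_cblinear[OF pA]]] by blast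
  obtain KM where KM: "KM > 0" "\<And>y. norm (M y) \<le> norm y * KM"
    using bounded_linear.pos_bounded[OF cblinear_bl[OF cM]] by blast
  have nAup: "nA y \<le> KA * (norm y)^2" for y
  proof -
    have "nA y \<le> cmod (cinner (A y) y)" unfolding nA_def inner_A_def by (rule complex_Re_le_cmod)
    also have "\<dots> \<le> norm (A y) * norm y" by (rule cinner_CS)
    also have "\<dots> \<le> norm y * KA * norm y" using KA(2) by (intro mult_right_mono) auto
    finally show ?thesis by (simp add: power2_eq_square algebra_simps)
  qed
  have Mpow_norm: "norm ((M ^^ a) y) \<le> KM ^ a * norm y" for a y
  proof (induction a)
    case 0 then show ?case by simp
  next
    case (Suc a)
    have "norm ((M ^^ Suc a) y) = norm (M ((M ^^ a) y))" by simp
    also have "\<dots> \<le> norm ((M ^^ a) y) * KM" by (rule KM(2))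
    also have "\<dots> \<le> KM ^ a * norm y * KM" using Suc.IH KM(1) by (intro mult_right_mono) auto
    finally show ?case by (simp add: algebra_simps)
  qed
  have main: "nA (T x) \<le> KM * nA x" for x
  proof (cases "nA x = 0")
    case True
    then have "(nA (T x))^2 \<le> 0" using g[of x] by simp
    then show ?thesis using True by simp
  next
    case False
    then have xpos: "nA x > 0" using nA0[of x] by simp
    define r where "r = nA (T x) / nA x"
    have r0: "r \<ge> 0" unfolding r_def using nA0 xpos by simp
    have lower: "r ^ (2 ^ Suc j) * nA x \<le> nA ((M ^^ (2 ^ j)) x)" for j
    proof (induction j)
      case 0
      have "r ^ 2 * nA x = (nA (T x))^2 / nA x" unfolding r_def using xpos by (simp add: power2_eq_square)
      also have "\<dots> \<le> nA (M x)" using g[of x] xpos by (simp add: divide_le_eq)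
      finally show ?case by simp
    next
      case (Suc j)
      have "(r ^ (2 ^ Suc j) * nA x)^2 \<le> (nA ((M ^^ (2 ^ j)) x))^2"
        using Suc.IH r0 nA0 xpos by (intro power_mono) auto
      also have "\<dots> \<le> nA ((M ^^ (2 * 2 ^ j)) x) * nA x" by (rule key)
      finally have "(r ^ (2 ^ Suc (Suc j))) * nA x * nA x \<le> nA ((M ^^ (2 ^ Suc j)) x) * nA x"
        by (simp add: power2_eq_square power_mult[symmetric] power_add[symmetric] mult_2 algebra_simps)
      then show ?case using xpos by simp
    qed
    have upper: "nA ((M ^^ a) x) \<le> KA * KM ^ (2 * a) * (norm x)^2" for a
    proof -
      have "nA ((M ^^ a) x) \<le> KA * (norm ((M ^^ a) x))^2" by (rule nAup)
      also have "\<dots> \<le> KA * (KM ^ a * norm x)^2"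
        using Mpow_norm KA(1) by (intro mult_left_mono power_mono) auto
      finally show ?thesis by (simp add: power_mult_distrib power_mult[symmetric] mult.commute mult.left_commute)
    qed
    show ?thesis
    proof (rule ccontr)
      assume "\<not> ?thesis"
      then have "r > KM" unfolding r_def using xpos by (simp add: field_simps)
      define q where "q = r / KM"
      have q1: "q > 1" unfolding q_def using \<open>r > KM\<close> KM(1) by simp
      define C where "C = KA * (norm x)^2 / nA x"
      have bound: "q ^ (2 ^ Suc j) \<le> C" for j
      proof -
        have "r ^ (2 ^ Suc j) * nA x \<le> KA * KM ^ (2 * 2 ^ j) * (norm x)^2"
          using lower[of j] upper[of "2 ^ j"] by linarith
        then have "r ^ (2 ^ Suc j) \<le> KA * KM ^ (2 ^ Suc j) * (norm x)^2 / nA x"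
          using xpos by (simp add: le_divide_eq)
        then show ?thesis unfolding q_def C_def using KM(1)
          by (simp add: power_divide divide_le_eq field_simps)
      qed
      obtain n where "C < q ^ n" using real_arch_pow[OF q1] by blast
      moreover have "n < 2 ^ n" by (rule less_exp)
      then have "n \<le> 2 * 2 ^ n" by linarith
      then have "n \<le> 2 ^ Suc n" by simp
      then have "q ^ n \<le> q ^ (2 ^ Suc n)" using q1 by (intro power_increasing) auto
      ultimately show False using bound[of n] by simp
    qed
  qed
  show ?thesis unfolding Abdd_def
  proof (intro exI[of _ "sqrt KM"] conjI allI)
    show "sqrt KM \<ge> 0" using KM by simp
    fix x
    have "norm_A A (T x) = sqrt (nA (T x))" unfolding norm_A_def nA_def ..
    also have "\<dots> \<le> sqrt (KM * nA x)" using main by simp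
    also have "\<dots> = sqrt KM * norm_A A x" unfolding norm_A_def nA_def by (simp add: real_sqrt_mult)
    finally show "norm_A A (T x) \<le> sqrt KM * norm_A A x" .
  qed
qed



lemma psd_scale_self:
  assumes "psd_form B"
  shows "Re (B (scaleC c x) (scaleC c x)) = (cmod c)^2 * Re (B x x)"
proof -
  interpret psd_form B by (rule assms)
  have "B (scaleC c x) (scaleC c x) = (c * cnj c) * B x x" by (simp add: scale_left scale_right)
  also have "c * cnj c = of_real ((cmod c)^2)" by (rule complex_norm_square[symmetric])
  also have "B x x = of_real (Re (B x x))" by (rule self_of_real)
  finally show ?thesis by (simp only: of_real_mult[symmetric] Re_complex_of_real)
qed

lemma psd_real_cmod:
  assumes "Im z = 0"
  shows "(Re z)^2 = (cmod z)^2"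
  using assms by (simp add: cmod_power2)

lemma mccarthy:
  fixes A M :: "'a::chilbert_space \<Rightarrow> 'a"
  assumes pA: "positive_op A" and cM: "cblinear M"
    and sa: "\<And>u v. inner_A A (M u) v = inner_A A u (M v)"
    and pos: "\<And>u. 0 \<le> Re (inner_A A (M u) u)"
    and x1: "Re (inner_A A x x) = 1"
  shows "(Re (inner_A A (M x) x))^n \<le> Re (inner_A A ((M ^^ n) x) x)"
    and "Im (inner_A A ((M ^^ n) x) x) = 0"
proof -
  interpret B: psd_form "inner_A A" by (rule innerA_psd[OF pA])
  have Mpsa: "inner_A A ((M ^^ a) u) v = inner_A A u ((M ^^ a) v)" for a u v
  proof (induction a arbitrary: u v)
    case 0 then show ?case by simp
  next
    case (Suc a)
    have "inner_A A ((M ^^ Suc a) u) v = inner_A A (M ((M ^^ a) u)) v" by simp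
    also have "\<dots> = inner_A A ((M ^^ a) u) (M v)" by (rule sa)
    also have "\<dots> = inner_A A u ((M ^^ a) (M v))" by (rule Suc.IH)
    also have "(M ^^ a) (M v) = (M ^^ Suc a) v" by (simp add: funpow_swap1)
    finally show ?case .
  qed
  have comb: "inner_A A ((M ^^ a) x) ((M ^^ b) x) = inner_A A ((M ^^ (a + b)) x) x" for a b
  proof -
    have "inner_A A ((M ^^ b) ((M ^^ a) x)) x = inner_A A ((M ^^ a) x) ((M ^^ b) x)" by (rule Mpsa)
    moreover have "(M ^^ b) ((M ^^ a) x) = (M ^^ (a + b)) x" by (subst add.commute) (simp add: funpow_add)
    ultimately show ?thesis by simp
  qed
  have realv: "Im (inner_A A ((M ^^ j) x) x) = 0" for j
  proof -
    have h: "inner_A A ((M ^^ j) x) x = cnj (inner_A A ((M ^^ j) x) x)"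
      by (metis Mpsa B.herm)
    have "Im (inner_A A ((M ^^ j) x) x) = Im (cnj (inner_A A ((M ^^ j) x) x))" using h by (rule arg_cong)
    then show ?thesis by simp
  qed
  then show "Im (inner_A A ((M ^^ n) x) x) = 0" .
  define f where "f j = Re (inner_A A ((M ^^ j) x) x)" for j
  have Bpsd: "psd_form (\<lambda>u v. inner_A A (M u) v)"
  proof
    show "inner_A A (M (u + v)) w = inner_A A (M u) w + inner_A A (M v) w" for u v w
      by (simp add: cblinear_add[OF cM] B.add_left)
    show "inner_A A (M (scaleC c u)) v = c * inner_A A (M u) v" for c u v
      by (simp add: cblinear_scale[OF cM] B.scale_left)
    show "inner_A A (M u) v = cnj (inner_A A (M v) u)" for u v
      by (simp add: sa B.herm[of u "M v"])
    show "0 \<le> Re (inner_A A (M u) u)" for u by (rule pos)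
  qed
  have nn: "f j \<ge> 0" for j
  proof (cases "even j")
    case True
    then obtain c where "j = 2 * c" by (rule evenE)
    then have j: "j = c + c" by simp
    have "f j = Re (inner_A A ((M ^^ c) x) ((M ^^ c) x))" unfolding f_def j comb ..
    then show ?thesis using B.nonneg by simp
  next
    case False
    then obtain c where "j = 2 * c + 1" by (rule oddE)
    then have j: "j = Suc c + c" by simp
    have "f j = Re (inner_A A (M ((M ^^ c) x)) ((M ^^ c) x))"
      unfolding f_def j comb[symmetric] by simp
    then show ?thesis using pos by simp
  qed
  have lc: "(f (Suc m))^2 \<le> f m * f (Suc (Suc m))" for m
  proof (cases "even m")
    case True
    then obtain c where "m = 2 * c" by (rule evenE)
    then have m: "m = c + c" by simp
    have "(f (Suc m))^2 = (cmod (inner_A A ((M ^^ Suc m) x) x))^2"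
      unfolding f_def by (rule psd_real_cmod[OF realv])
    also have "inner_A A ((M ^^ Suc m) x) x = inner_A A ((M ^^ Suc c) x) ((M ^^ c) x)"
      unfolding m comb by simp
    also have "(cmod \<dots>)^2 \<le> Re (inner_A A ((M ^^ Suc c) x) ((M ^^ Suc c) x)) * Re (inner_A A ((M ^^ c) x) ((M ^^ c) x))"
      by (rule B.CS)
    also have "\<dots> = f (Suc (Suc m)) * f m" unfolding f_def m comb by simp
    finally show ?thesis by (simp add: mult.commute)
  next
    case False
    then obtain c where "m = 2 * c + 1" by (rule oddE)
    then have m: "m = Suc (c + c)" by simp
    have "(f (Suc m))^2 = (cmod (inner_A A ((M ^^ Suc m) x) x))^2"
      unfolding f_def by (rule psd_real_cmod[OF realv])
    also have "inner_A A ((M ^^ Suc m) x) x = inner_A A (M ((M ^^ c) x)) ((M ^^ Suc c) x)"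
    proof -
      have e: "Suc m = Suc c + Suc c" using m by simp
      show ?thesis unfolding e comb[symmetric] by simp
    qed
    also have "(cmod \<dots>)^2 \<le> Re (inner_A A (M ((M ^^ c) x)) ((M ^^ c) x)) * Re (inner_A A (M ((M ^^ Suc c) x)) ((M ^^ Suc c) x))"
      by (rule psd_form.CS[OF Bpsd])
    also have "\<dots> = f m * f (Suc (Suc m))"
    proof -
      have e1: "m = Suc c + c" using m by simp
      have e2: "Suc (Suc m) = Suc (Suc c) + Suc c" using m by simp
      have "inner_A A (M ((M ^^ c) x)) ((M ^^ c) x) = inner_A A ((M ^^ m) x) x"
        unfolding e1 comb[symmetric] by simp
      moreover have "inner_A A (M ((M ^^ Suc c) x)) ((M ^^ Suc c) x) = inner_A A ((M ^^ Suc (Suc m)) x) x"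
        unfolding e2 comb[symmetric] by simp
      ultimately show ?thesis unfolding f_def by simp
    qed
    finally show ?thesis .
  qed
  have f0: "f 0 = 1" unfolding f_def using x1 by simp
  have "f 1 ^ n \<le> f n" by (rule logconvex_pow[OF nn f0 lc])
  then show "(Re (inner_A A (M x) x))^n \<le> Re (inner_A A ((M ^^ n) x) x)" unfolding f_def by simp
qed



lemma norm_A_scaleC:
  assumes pA: "positive_op A"
  shows "norm_A A (scaleC c x) = cmod c * norm_A A x"
proof -
  have "Re (inner_A A (scaleC c x) (scaleC c x)) = (cmod c)^2 * Re (inner_A A x x)"
    by (rule psd_scale_self[OF innerA_psd[OF pA]])
  then show ?thesis unfolding norm_A_def by (simp add: real_sqrt_mult)
qed

lemma norm_A_add:
  assumes pA: "positive_op A"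
  shows "norm_A A (x + y) \<le> norm_A A x + norm_A A y"
  unfolding norm_A_def by (rule psd_form.triangle[OF innerA_psd[OF pA]])

lemma innerA_CS:
  assumes pA: "positive_op A"
  shows "cmod (inner_A A x y) \<le> norm_A A x * norm_A A y"
  unfolding norm_A_def by (rule psd_form.CS'[OF innerA_psd[OF pA]])

lemma Abdd_comp:
  assumes "Abdd A S" "Abdd A T"
  shows "Abdd A (S \<circ> T)"
proof -
  obtain c1 where c1: "c1 \<ge> 0" "\<And>x. norm_A A (S x) \<le> c1 * norm_A A x" using assms(1) unfolding Abdd_def by blast
  obtain c2 where c2: "c2 \<ge> 0" "\<And>x. norm_A A (T x) \<le> c2 * norm_A A x" using assms(2) unfolding Abdd_def by blast
  have "norm_A A (S (T x)) \<le> (c1 * c2) * norm_A A x" for x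
  proof -
    have "norm_A A (S (T x)) \<le> c1 * norm_A A (T x)" by (rule c1(2))
    also have "\<dots> \<le> c1 * (c2 * norm_A A x)" using c1(1) c2(2) by (rule mult_left_mono[rotated])
    finally show ?thesis by (simp add: mult.assoc)
  qed
  then show ?thesis unfolding Abdd_def using c1(1) c2(1) by (intro exI[of _ "c1 * c2"]) auto
qed

lemma Abdd_id: "Abdd A (\<lambda>x. x)"
  unfolding Abdd_def by (intro exI[of _ 1]) auto

lemma Abdd_pow: "Abdd A T \<Longrightarrow> Abdd A (T ^^ n)"
proof (induction n)
  case 0 then show ?case using Abdd_id by (simp add: id_def)
next
  case (Suc n)
  then have "Abdd A (T \<circ> (T ^^ n))" using Abdd_comp by blast
  then show ?case by (simp only: funpow.simps(2))
qed

lemma Abdd_plus_i: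
  assumes pA: "positive_op A" and "Abdd A P" "Abdd A Q"
  shows "Abdd A (\<lambda>x. P x + scaleC \<i> (Q x))"
proof -
  obtain c1 where c1: "c1 \<ge> 0" "\<And>x. norm_A A (P x) \<le> c1 * norm_A A x" using assms(2) unfolding Abdd_def by blast
  obtain c2 where c2: "c2 \<ge> 0" "\<And>x. norm_A A (Q x) \<le> c2 * norm_A A x" using assms(3) unfolding Abdd_def by blast
  have "norm_A A (P x + scaleC \<i> (Q x)) \<le> (c1 + c2) * norm_A A x" for x
  proof -
    have "norm_A A (P x + scaleC \<i> (Q x)) \<le> norm_A A (P x) + norm_A A (scaleC \<i> (Q x))"
      by (rule norm_A_add[OF pA])
    also have "norm_A A (scaleC \<i> (Q x)) = norm_A A (Q x)" by (simp add: norm_A_scaleC[OF pA])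
    finally show ?thesis using c1(2)[of x] c2(2)[of x] by (simp add: algebra_simps)
  qed
  then show ?thesis unfolding Abdd_def using c1(1) c2(1) by (intro exI[of _ "c1 + c2"]) auto
qed

lemma omega_upper:
  assumes pA: "positive_op A" and R: "Abdd A R" and x1: "norm_A A x = 1"
  shows "cmod (inner_A A (R x) x) \<le> omega_A A R"
proof -
  obtain c where c: "c \<ge> 0" "\<And>x. norm_A A (R x) \<le> c * norm_A A x" using R unfolding Abdd_def by blast
  have "bdd_above {cmod (inner_A A (R x) x) | x. norm_A A x = 1}"
  proof (rule bdd_aboveI)
    fix e assume "e \<in> {cmod (inner_A A (R x) x) | x. norm_A A x = 1}"
    then obtain y where y: "norm_A A y = 1" "e = cmod (inner_A A (R y) y)" by blast
    have "e \<le> norm_A A (R y) * norm_A A y" using y innerA_CS[OF pA, of "R y" y] by simp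
    also have "\<dots> \<le> c" using y c(2)[of y] by simp
    finally show "e \<le> c" .
  qed
  moreover have "cmod (inner_A A (R x) x) \<in> {cmod (inner_A A (R x) x) | x. norm_A A x = 1}" using x1 by blast
  ultimately show ?thesis unfolding omega_A_def by (rule cSup_upper[rotated])
qed

lemma single_bound:
  fixes A S :: "'a::chilbert_space \<Rightarrow> 'a"
  assumes pA: "positive_op A" and SB: "S \<in> B_A A" and x1: "norm_A A x = 1"
  shows "cmod (inner_A A (S x) x) ^ (2 * n)
    \<le> omega_A A (\<lambda>x. ((sharp_A A S \<circ> S) ^^ n) x + \<i> *\<^sub>C ((S \<circ> sharp_A A S) ^^ n) x) / sqrt 2"
proof -
  interpret B: psd_form "inner_A A" by (rule innerA_psd[OF pA])
  define X where "X = sharp_A A S"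
  have cX: "cblinear X" unfolding X_def by (rule sharp_props(1)[OF pA SB])
  have XS: "inner_A A (X y) z = inner_A A y (S z)" for y z unfolding X_def by (rule sharp_props(2)[OF pA SB])
  obtain W where cS: "cblinear S" and cW: "cblinear W"
    and SW: "\<And>x y. inner_A A (S x) y = inner_A A x (W y)"
    using SB unfolding B_A_def by blast
  have SX: "inner_A A (S a) b = inner_A A a (X b)" for a b
  proof -
    have "inner_A A (S a) b = cnj (inner_A A b (S a))" by (rule B.herm)
    also have "\<dots> = cnj (inner_A A (X b) a)" by (simp only: XS)
    also have "\<dots> = inner_A A a (X b)" by (simp add: B.herm[of a "X b"])
    finally show ?thesis .
  qed
  have AbS: "Abdd A S" by (rule A_bounded[OF pA cS cW SW])
  have AbX: "Abdd A X" by (rule A_bounded[OF pA cX cS XS])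
  define P where "P = X \<circ> S"
  define Q where "Q = S \<circ> X"
  have cP: "cblinear P" unfolding P_def by (rule cblinear_comp[OF cX cS])
  have cQ: "cblinear Q" unfolding Q_def by (rule cblinear_comp[OF cS cX])
  have Pe: "inner_A A (P u) v = inner_A A (S u) (S v)" for u v unfolding P_def by (simp add: XS)
  have Qe: "inner_A A (Q u) v = inner_A A (X u) (X v)" for u v unfolding Q_def by (simp add: SX)
  have Psa: "inner_A A (P u) v = inner_A A u (P v)" for u v by (simp only: Pe) (simp add: SX P_def)
  have Qsa: "inner_A A (Q u) v = inner_A A u (Q v)" for u v by (simp only: Qe) (simp add: XS Q_def)
  have Ppos: "0 \<le> Re (inner_A A (P u) u)" for u unfolding Pe by (rule B.nonneg)
  have Qpos: "0 \<le> Re (inner_A A (Q u) u)" for u unfolding Qe by (rule B.nonneg)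
  have x1': "Re (inner_A A x x) = 1"
  proof -
    have "(norm_A A x)^2 = Re (inner_A A x x)" by (rule norm_A_sq[OF pA])
    then show ?thesis using x1 by simp
  qed
  define Pn where "Pn = Re (inner_A A ((P ^^ n) x) x)"
  define Qn where "Qn = Re (inner_A A ((Q ^^ n) x) x)"
  define p where "p = Re (inner_A A (P x) x)"
  define q where "q = Re (inner_A A (Q x) x)"
  have pPn: "p ^ n \<le> Pn" unfolding p_def Pn_def by (rule mccarthy(1)[OF pA cP Psa Ppos x1'])
  have qQn: "q ^ n \<le> Qn" unfolding q_def Qn_def by (rule mccarthy(1)[OF pA cQ Qsa Qpos x1'])
  have imP: "Im (inner_A A ((P ^^ n) x) x) = 0" by (rule mccarthy(2)[OF pA cP Psa Ppos x1'])
  have imQ: "Im (inner_A A ((Q ^^ n) x) x) = 0" by (rule mccarthy(2)[OF pA cQ Qsa Qpos x1'])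
  have p0: "p \<ge> 0" unfolding p_def by (rule Ppos)
  have q0: "q \<ge> 0" unfolding q_def by (rule Qpos)
  define sP where "sP = norm_A A (S x)"
  define sQ where "sQ = norm_A A (X x)"
  have sP0: "sP \<ge> 0" unfolding sP_def by (rule norm_A_nonneg[OF pA])
  have sQ0: "sQ \<ge> 0" unfolding sQ_def by (rule norm_A_nonneg[OF pA])
  have psP: "p = sP^2" unfolding p_def sP_def Pe by (simp add: norm_A_sq[OF pA])
  have qsQ: "q = sQ^2" unfolding q_def sQ_def Qe by (simp add: norm_A_sq[OF pA])
  define a where "a = cmod (inner_A A (S x) x)"
  have a0: "a \<ge> 0" unfolding a_def by simp
  have a1: "a \<le> sP" unfolding a_def sP_def using innerA_CS[OF pA, of "S x" x] x1 by simp
  have a2: "a \<le> sQ"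
  proof -
    have "a = cmod (inner_A A x (X x))" unfolding a_def by (simp only: SX)
    also have "\<dots> = cmod (cnj (inner_A A (X x) x))" by (simp only: B.herm[of x "X x"])
    also have "\<dots> = cmod (inner_A A (X x) x)" by simp
    also have "\<dots> \<le> sQ" unfolding sQ_def using innerA_CS[OF pA, of "X x" x] x1 by simp
    finally show ?thesis .
  qed
  have "a^2 \<le> sP * sQ" using a1 a2 a0 sP0 by (simp add: power2_eq_square mult_mono)
  then have "(a^2)^(2*n) \<le> (sP * sQ)^(2*n)" using a0 by (intro power_mono) auto
  also have "(sP * sQ)^(2*n) = p ^ n * q ^ n"
    unfolding psP qsQ by (simp add: power_mult_distrib power_mult[symmetric] mult.commute)
  also have "\<dots> \<le> Pn * Qn"
  proof -
    have "0 \<le> p ^ n" using p0 by simp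
    then have "0 \<le> Pn" using pPn by linarith
    moreover have "0 \<le> q ^ n" using q0 by simp
    ultimately show ?thesis using pPn qQn by (intro mult_mono) auto
  qed
  also have "\<dots> \<le> (Pn^2 + Qn^2) / 2"
  proof -
    have "0 \<le> (Pn - Qn)^2" by simp
    then have "2 * (Pn * Qn) \<le> Pn^2 + Qn^2" by (simp add: power2_diff)
    then show ?thesis by simp
  qed
  also have "(a^2)^(2*n) = (a^(2*n))^2"
  proof -
    have "(a^2)^(2*n) = a^(2*(2*n))" by (rule power_mult[symmetric])
    also have "2*(2*n) = (2*n)*2" by simp
    also have "a^((2*n)*2) = (a^(2*n))^2" by (rule power_mult)
    finally show ?thesis .
  qed
  finally have "(a^(2*n))^2 \<le> (Pn^2 + Qn^2) / 2" .
  then have "a^(2*n) \<le> sqrt ((Pn^2 + Qn^2) / 2)" by (rule real_le_rsqrt)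
  also have "\<dots> = sqrt (Pn^2 + Qn^2) / sqrt 2" by (simp add: real_sqrt_divide)
  also have "sqrt (Pn^2 + Qn^2) = cmod (inner_A A (((X \<circ> S) ^^ n) x + \<i> *\<^sub>C ((S \<circ> X) ^^ n) x) x)"
  proof -
    have e: "inner_A A (((X \<circ> S) ^^ n) x + \<i> *\<^sub>C ((S \<circ> X) ^^ n) x) x
        = inner_A A ((P ^^ n) x) x + \<i> * inner_A A ((Q ^^ n) x) x"
      unfolding P_def Q_def by (simp add: B.add_left B.scale_left)
    have "Re (inner_A A ((P ^^ n) x) x + \<i> * inner_A A ((Q ^^ n) x) x) = Pn"
      unfolding Pn_def using imQ by simp
    moreover have "Im (inner_A A ((P ^^ n) x) x + \<i> * inner_A A ((Q ^^ n) x) x) = Qn"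
      unfolding Qn_def using imP by simp
    ultimately show ?thesis unfolding e by (simp add: cmod_def)
  qed
  also have "cmod (inner_A A (((X \<circ> S) ^^ n) x + \<i> *\<^sub>C ((S \<circ> X) ^^ n) x) x)
      \<le> omega_A A (\<lambda>x. ((X \<circ> S) ^^ n) x + \<i> *\<^sub>C ((S \<circ> X) ^^ n) x)"
  proof (rule omega_upper[OF pA _ x1])
    show "Abdd A (\<lambda>x. ((X \<circ> S) ^^ n) x + \<i> *\<^sub>C ((S \<circ> X) ^^ n) x)"
      by (intro Abdd_plus_i[OF pA] Abdd_pow Abdd_comp AbS AbX)
  qed
  finally have "a^(2*n) \<le> omega_A A (\<lambda>x. ((X \<circ> S) ^^ n) x + \<i> *\<^sub>C ((S \<circ> X) ^^ n) x) / sqrt 2"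
    by (simp add: divide_right_mono)
  then show ?thesis unfolding a_def X_def .
qed

lemma exists_unit:
  fixes A :: "'a::chilbert_space \<Rightarrow> 'a"
  assumes pA: "positive_op A" and nz: "A \<noteq> (\<lambda>_. 0)"
  shows "\<exists>x. norm_A A x = 1"
proof -
  interpret B: psd_form "inner_A A" by (rule innerA_psd[OF pA])
  obtain y where y: "A y \<noteq> 0" using nz by auto
  have pos: "Re (inner_A A y y) > 0"
  proof (rule ccontr)
    assume "\<not> ?thesis"
    then have z: "Re (inner_A A y y) = 0" using B.nonneg[of y] by simp
    have "(cmod (inner_A A y (A y)))^2 \<le> Re (inner_A A y y) * Re (inner_A A (A y) (A y))" by (rule B.CS)
    then have "cmod (inner_A A y (A y)) = 0" using z by simp
    then have "cinner (A y) (A y) = 0" unfolding inner_A_def by simp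
    then have "A y = 0" by (rule cinner_self_zero_imp)
    then show False using y by simp
  qed
  define c where "c = complex_of_real (1 / sqrt (Re (inner_A A y y)))"
  have "Re (inner_A A (scaleC c y) (scaleC c y)) = (cmod c)^2 * Re (inner_A A y y)"
    by (rule psd_scale_self[OF innerA_psd[OF pA]])
  also have "\<dots> = 1"
  proof -
    have "cmod c = \<bar>1 / sqrt (Re (inner_A A y y))\<bar>" unfolding c_def by (rule norm_of_real)
    then have "cmod c = 1 / sqrt (Re (inner_A A y y))" using pos by simp
    then show ?thesis using pos by (simp add: power_divide)
  qed
  finally show ?thesis unfolding norm_A_def by (intro exI[of _ "scaleC c y"]) simp
qed



theorem theorem3p13:
  fixes A :: "'a::chilbert_space \<Rightarrow> 'a"
    and S :: "nat \<Rightarrow> 'a \<Rightarrow> 'a"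
    and k n :: nat
  assumes "positive_op A" and "A \<noteq> (\<lambda>_. 0)"
    and "k \<ge> 1"
    and "\<forall>i\<in>{1..k}. S i \<in> B_A A"
    and "n \<ge> 1"
  shows "omega_A A (\<lambda>x. \<Sum>i=1..k. S i x) ^ (2 * n)
    \<le> real k ^ (2 * n - 1) / sqrt 2 *
       (\<Sum>i=1..k. omega_A A (\<lambda>x. ((sharp_A A (S i) \<circ> S i) ^^ n) x
                                  + \<i> *\<^sub>C ((S i \<circ> sharp_A A (S i)) ^^ n) x))"
proof -
  have pA: "positive_op A" by (rule assms(1))
  interpret B: psd_form "inner_A A" by (rule innerA_psd[OF pA])
  define om where "om i = omega_A A (\<lambda>x. ((sharp_A A (S i) \<circ> S i) ^^ n) x
                                  + \<i> *\<^sub>C ((S i \<circ> sharp_A A (S i)) ^^ n) x)" for i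
  define R where "R = real k ^ (2 * n - 1) / sqrt 2 * (\<Sum>i=1..k. om i)"
  define E where "E = {cmod (inner_A A (\<Sum>i=1..k. S i x) x) | x. norm_A A x = 1}"
  have finI: "finite {1..k}" by simp
  have neI: "{1..k} \<noteq> {}" using assms(3) by simp
  have cardI: "card {1..k} = k" by simp
  have elem: "e ^ (2 * n) \<le> R" if eE: "e \<in> E" for e
  proof -
    obtain x where x1: "norm_A A x = 1" and e: "e = cmod (inner_A A (\<Sum>i=1..k. S i x) x)"
      using eE unfolding E_def by blast
    define a where "a i = cmod (inner_A A (S i x) x)" for i
    have "inner_A A (\<Sum>i=1..k. S i x) x = (\<Sum>i=1..k. inner_A A (S i x) x)" by (rule B.sum_left)
    then have "e \<le> (\<Sum>i=1..k. a i)" unfolding e a_def by (simp add: norm_sum)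
    moreover have "0 \<le> e" unfolding e by simp
    ultimately have "e ^ (2 * n) \<le> (\<Sum>i=1..k. a i) ^ (2 * n)" by (intro power_mono)
    also have "\<dots> \<le> real (card {1..k}) ^ (2 * n - 1) * (\<Sum>i=1..k. a i ^ (2 * n))"
      by (rule power_mean_sum[OF finI neI assms(5)])
    also have "(\<Sum>i=1..k. a i ^ (2 * n)) \<le> (\<Sum>i=1..k. om i / sqrt 2)"
    proof (rule sum_mono)
      fix i assume "i \<in> {1..k}"
      then have "S i \<in> B_A A" using assms(4) by blast
      then show "a i ^ (2 * n) \<le> om i / sqrt 2"
        unfolding a_def om_def by (rule single_bound[OF pA _ x1])
    qed
    then have "real (card {1..k}) ^ (2 * n - 1) * (\<Sum>i=1..k. a i ^ (2 * n))
        \<le> real (card {1..k}) ^ (2 * n - 1) * (\<Sum>i=1..k. om i / sqrt 2)"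
      by (intro mult_left_mono) auto
    also have "\<dots> = R" unfolding R_def cardI by (simp add: sum_divide_distrib[symmetric])
    finally show ?thesis .
  qed
  obtain x0 where x0: "norm_A A x0 = 1" using exists_unit[OF pA assms(2)] by blast
  define e0 where "e0 = cmod (inner_A A (\<Sum>i=1..k. S i x0) x0)"
  have e0E: "e0 \<in> E" unfolding E_def e0_def using x0 by blast
  have e00: "e0 \<ge> 0" unfolding e0_def by simp
  have R0: "R \<ge> 0" using elem[OF e0E] e00 by (meson order_trans zero_le_power)
  have n2: "0 < 2 * n" using assms(5) by simp
  define \<rho> where "\<rho> = root (2 * n) R"
  have ub: "e \<le> \<rho>" if "e \<in> E" for e
  proof -
    have e0: "e \<ge> 0" using that unfolding E_def by auto
    have "e = root (2 * n) (e ^ (2 * n))" using real_root_power_cancel[OF n2 e0] by simp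
    also have "\<dots> \<le> root (2 * n) R" by (rule real_root_le_mono[OF n2 elem[OF that]])
    finally show ?thesis unfolding \<rho>_def .
  qed
  have supE: "Sup E \<le> \<rho>" using e0E ub by (intro cSup_least) auto
  have bdd: "bdd_above E" using ub by (intro bdd_aboveI) auto
  have sup0: "Sup E \<ge> 0" using cSup_upper[OF e0E bdd] e00 by simp
  have "(Sup E) ^ (2 * n) \<le> \<rho> ^ (2 * n)" using supE sup0 by (intro power_mono)
  also have "\<dots> = R" unfolding \<rho>_def using n2 R0 by simp
  finally have "(Sup E) ^ (2 * n) \<le> R" .
  moreover have "omega_A A (\<lambda>x. \<Sum>i=1..k. S i x) = Sup E" unfolding omega_A_def E_def by simp
  ultimately show ?thesis unfolding R_def om_def by simp
qed


end
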